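(* Let $A \in \mathbb{C}^{m\times n}$, $B \in \mathbb{C}^{p\times q}$, $C \in \mathbb{C}^{m\times q}$. Then there always exists $\widehat{X} \in \mathbb{C}^{n\times p}$ such that $A^{*}(C - AXB)(C - AXB)^{*}A \succcurlyeq A^{*}(C - A\widehat{X}B)(C - A\widehat{X}B)^{*}A$ for all $X \in \mathbb{C}^{n\times p}$, and there always exists $\widehat{X} \in \mathbb{C}^{n\times p}$ such that $B(C - AXB)^{*}(C - AXB)B^{*} \succcurlyeq B(C - A\widehat{X}B)^{*}(C - A\widehat{X}B)B^{*}$ for all $X \in \mathbb{C}^{n\times p}$. Moreover, the set of such minimizers $\widehat{X}$ for the first problem, the set of such minimizers for the second problem, and the set of minimizers of $X \mapsto \mathrm{tr}[(C - AXB)(C - AXB)^{*}]$ over $\mathbb{C}^{n\times p}$ all coincide and equal $\{A^{\dagger}CB^{\dagger} + F_AV_1 + V_2E_B : V_1, V_2 \in \mathbb{C}^{n\times p}\}$.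
   Context: $\succcurlyeq$ is the Löwner order ($P \succcurlyeq Q$ iff $P - Q$ is positive semidefinite); $U^{\dagger}$ is the Moore–Penrose inverse; $E_U = I - UU^{\dagger}$, $F_U = I - U^{\dagger}U$; $\mathrm{tr}$ is the trace. *)

theory Defs
  imports "HOL-Analysis.Analysis"
begin

text \<open>Complex matrices are rendered as \<open>complex^'c^'r\<close> (r rows, c columns).\<close>

definition cadj :: "complex^'c^'r \<Rightarrow> complex^'r^'c" where
  "cadj A = (\<chi> i j. cnj (A $ j $ i))"

definition hermitian :: "complex^'n^'n \<Rightarrow> bool" where
  "hermitian M \<longleftrightarrow> cadj M = M"

definition psd :: "complex^'n^'n \<Rightarrow> bool" where
  "psd M \<longleftrightarrow> hermitian M \<and>
     (\<forall>x :: complex^'n. 0 \<le> Re (\<Sum>i\<in>UNIV. cnj (x $ i) * (M *v x) $ i))"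

definition loewner_ge :: "complex^'n^'n \<Rightarrow> complex^'n^'n \<Rightarrow> bool" where
  "loewner_ge P Q \<longleftrightarrow> psd (P - Q)"

definition mp_inv :: "complex^'c^'r \<Rightarrow> complex^'r^'c" where
  "mp_inv A = (THE G. A ** G ** A = A \<and> G ** A ** G = G \<and>
                      cadj (A ** G) = A ** G \<and> cadj (G ** A) = G ** A)"

definition E_mat :: "complex^'c^'r \<Rightarrow> complex^'r^'r" where
  "E_mat U = mat 1 - U ** mp_inv U"

definition F_mat :: "complex^'c^'r \<Rightarrow> complex^'c^'c" where
  "F_mat U = mat 1 - mp_inv U ** U"

end

theory Submission imports Defs begin

lemma cadj_cadj[simp]: "cadj (cadj A) = A"
  by (simp add: cadj_def vec_eq_iff)
lemma cadj_mul: "cadj (A ** B) = cadj B ** cadj A"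
  by (simp add: cadj_def vec_eq_iff matrix_matrix_mult_def mult.commute)
lemma cadj_add[simp]: "cadj (A + B) = cadj A + cadj B"
  by (simp add: cadj_def vec_eq_iff)
lemma cadj_diff[simp]: "cadj (A - B) = cadj A - cadj B"
  by (simp add: cadj_def vec_eq_iff)
lemma cadj_minus[simp]: "cadj (- B) = - cadj B"
  by (simp add: cadj_def vec_eq_iff)
lemma cadj_0[simp]: "cadj 0 = 0"
  by (simp add: cadj_def vec_eq_iff)
lemma cadj_1[simp]: "cadj (mat 1) = mat 1"
  by (simp add: cadj_def vec_eq_iff mat_def)

lemma matrix_sub_ldistrib: "(A::'a::ring_1^'n^'m) ** (B - C) = A ** B - A ** C"
  by (simp add: matrix_matrix_mult_def vec_eq_iff algebra_simps sum_subtractf)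
lemma matrix_sub_rdistrib: "((B::'a::ring_1^'n^'m) - C) ** A = B ** A - C ** A"
  by (simp add: matrix_matrix_mult_def vec_eq_iff algebra_simps sum_subtractf)
lemma matrix_add_rdistrib': "((B::'a::ring_1^'n^'m) + C) ** A = B ** A + C ** A"
  by (simp add: matrix_matrix_mult_def vec_eq_iff algebra_simps sum.distrib)
lemma matrix_mul_lzero'[simp]: "(0::'a::ring_1^'n^'m) ** A = 0"
  by (simp add: matrix_matrix_mult_def vec_eq_iff)
lemma matrix_mul_rzero'[simp]: "(A::'a::ring_1^'n^'m) ** 0 = 0"
  by (simp add: matrix_matrix_mult_def vec_eq_iff)

lemma cnj_mult_self: "cnj z * z = complex_of_real ((cmod z)^2)"
  by (simp add: mult.commute complex_mult_cnj cmod_power2)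
lemma Re_cnj_mult_self: "Re (cnj z * z) = (cmod z)^2"
  by (simp only: cnj_mult_self Re_complex_of_real)

lemma diag_adj_mul: "Re ((cadj T ** T) $ j $ j) = (\<Sum>i\<in>UNIV. (cmod (T $ i $ j))^2)"
  unfolding cadj_def matrix_matrix_mult_def by (simp only: vec_lambda_beta Re_sum Re_cnj_mult_self)

lemma adj_mul_zero: "cadj T ** T = 0 \<Longrightarrow> T = 0"
proof -
  assume h: "cadj T ** T = 0"
  show "T = 0"
  proof (simp add: vec_eq_iff, intro allI)
    fix i j
    have "(\<Sum>i\<in>UNIV. (cmod (T $ i $ j))^2) = 0"
      using diag_adj_mul[of T j] h by (simp del: norm_eq_zero)
    then have "\<forall>i\<in>UNIV. (cmod (T $ i $ j))^2 = 0"
      by (subst sum_nonneg_eq_0_iff[symmetric]) auto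
    then show "T $ i $ j = 0" by simp
  qed
qed

lemma mul_adj_zero: "M ** cadj M = 0 \<Longrightarrow> M = 0"
  using adj_mul_zero[of "cadj M"] by (metis cadj_cadj cadj_0)

lemma trace_mul_adj: "Re (trace (M ** cadj M)) = (\<Sum>j\<in>UNIV. \<Sum>i\<in>UNIV. (cmod (M $ j $ i))^2)"
proof -
  have "trace (M ** cadj M) = (\<Sum>j\<in>UNIV. (cadj (cadj M) ** cadj M) $ j $ j)"
    by (simp add: trace_def)
  then have "Re (trace (M ** cadj M)) = (\<Sum>j\<in>UNIV. Re ((cadj (cadj M) ** cadj M) $ j $ j))"
    by (simp add: Re_sum)
  also have "\<dots> = (\<Sum>j\<in>UNIV. (\<Sum>i\<in>UNIV. (cmod (M $ j $ i))^2))"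
    by (subst diag_adj_mul) (simp add: cadj_def)
  finally show ?thesis .
qed

lemma trace_mul_adj_nonneg: "0 \<le> Re (trace (M ** cadj M))"
  by (simp add: trace_mul_adj sum_nonneg)

lemma trace_mul_adj_zero: "Re (trace (M ** cadj M)) = 0 \<Longrightarrow> M = 0"
proof -
  assume h: "Re (trace (M ** cadj M)) = 0"
  show "M = 0"
  proof (simp add: vec_eq_iff, intro allI)
    fix i j
    have "\<forall>j\<in>UNIV. (\<Sum>i\<in>UNIV. (cmod (M $ j $ i))^2) = 0"
      using h by (subst sum_nonneg_eq_0_iff[symmetric]) (auto simp: trace_mul_adj intro: sum_nonneg)
    then have "\<forall>k\<in>UNIV. (cmod (M $ i $ k))^2 = 0"
      by (subst sum_nonneg_eq_0_iff[symmetric]) auto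
    then show "M $ i $ j = 0" by simp
  qed
qed

lemma quad_form: "Re (\<Sum>i\<in>UNIV. cnj (x $ i) * ((W ** cadj W) *v x) $ i)
   = (\<Sum>k\<in>UNIV. (cmod ((cadj W *v x) $ k))^2)"
proof -
  have "(\<Sum>i\<in>UNIV. cnj (x $ i) * ((W ** cadj W) *v x) $ i)
     = (\<Sum>i\<in>UNIV. cnj (x $ i) * (W *v (cadj W *v x)) $ i)"
    by (simp add: matrix_vector_mul_assoc)
  also have "\<dots> = (\<Sum>i\<in>UNIV. \<Sum>k\<in>UNIV. cnj (x $ i) * W $ i $ k * (cadj W *v x) $ k)"
    by (simp only: matrix_vector_mult_def vec_lambda_beta sum_distrib_left mult.assoc)
  also have "\<dots> = (\<Sum>k\<in>UNIV. (\<Sum>i\<in>UNIV. cnj (x $ i) * W $ i $ k) * (cadj W *v x) $ k)"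
    by (subst sum.swap) (simp add: sum_distrib_right)
  also have "\<dots> = (\<Sum>k\<in>UNIV. cnj ((cadj W *v x) $ k) * (cadj W *v x) $ k)"
    by (simp add: cadj_def matrix_vector_mult_def mult.commute)
  finally show ?thesis by (simp only: Re_sum Re_cnj_mult_self)
qed

lemma psd_gram: "psd (W ** cadj W)"
  unfolding psd_def hermitian_def
proof (intro conjI allI)
  show "cadj (W ** cadj W) = W ** cadj W" by (simp add: cadj_mul)
  fix x
  show "0 \<le> Re (\<Sum>i\<in>UNIV. cnj (x $ i) * ((W ** cadj W) *v x) $ i)"
    by (simp only: quad_form) (intro sum_nonneg, simp)
qed

lemma neg_psd_gram: "psd (- (W ** cadj W)) \<Longrightarrow> W = 0"
proof -
  assume h: "psd (- (W ** cadj W))"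
  have "cadj W = 0"
  proof (simp add: vec_eq_iff, intro allI)
    fix i j
    define x where "x = (axis j (1::complex) :: complex^'a)"
    have "0 \<le> Re (\<Sum>i\<in>UNIV. cnj (x $ i) * ((- (W ** cadj W)) *v x) $ i)"
      using h unfolding psd_def by blast
    also have "(\<Sum>i\<in>UNIV. cnj (x $ i) * ((- (W ** cadj W)) *v x) $ i)
       = - (\<Sum>i\<in>UNIV. cnj (x $ i) * ((W ** cadj W) *v x) $ i)"
      by (simp add: matrix_vector_mult_def sum_negf)
    finally have "(\<Sum>k\<in>UNIV. (cmod ((cadj W *v x) $ k))^2) \<le> 0"
      using quad_form[of x W] by simp
    moreover have "0 \<le> (\<Sum>k\<in>UNIV. (cmod ((cadj W *v x) $ k))^2)"
      by (intro sum_nonneg) simp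
    ultimately have "(\<Sum>k\<in>UNIV. (cmod ((cadj W *v x) $ k))^2) = 0" by linarith
    then have "\<forall>k\<in>UNIV. (cmod ((cadj W *v x) $ k))^2 = 0"
      by (subst sum_nonneg_eq_0_iff[symmetric]) auto
    then have "(cadj W *v x) $ i = 0" by simp
    moreover have "(cadj W *v x) $ i = cadj W $ i $ j"
      by (simp add: x_def matrix_vector_mult_def axis_def if_distrib cong: if_cong)
    ultimately show "cadj W $ i $ j = 0" by simp
  qed
  then show "W = 0" by (metis cadj_cadj cadj_0)
qed


lemma g_inverse_exists: "\<exists>G::complex^'m^'n. A ** G ** A = (A::complex^'n^'m)"
proof -
  obtain g where g: "Vector_Spaces.linear (*s) (*s) g" "\<forall>v\<in>((*v) A) ` UNIV. A *v (g v) = v"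
    using vec.linear_exists_right_inverse_on[OF matrix_vector_mul_linear_gen vec.subspace_UNIV, of A]
    by blast
  have "A ** matrix g ** A = A"
  proof (rule matrix_eq[THEN iffD2], intro allI)
    fix x
    show "(A ** matrix g ** A) *v x = A *v x"
      using g by (simp add: matrix_vector_mul_assoc[symmetric] matrix_works)
  qed
  then show ?thesis by blast
qed

lemma g_inverse_herm:
  assumes "cadj M = (M::complex^'n^'n)"
  shows "\<exists>N. M ** N ** M = M \<and> cadj N = N"
proof -
  obtain N where N: "M ** N ** M = M" using g_inverse_exists by blast
  have "M ** (N ** M ** cadj N) ** M = M"
  proof -
    have "M ** (N ** M ** cadj N) ** M = (M ** N ** M) ** cadj N ** M"
      by (simp add: matrix_mul_assoc)
    also have "\<dots> = M ** cadj N ** M" using N by simp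
    also have "\<dots> = cadj (M ** N ** M)" using assms by (simp add: cadj_mul matrix_mul_assoc)
    finally show ?thesis using N assms by simp
  qed
  moreover have "cadj (N ** M ** cadj N) = N ** M ** cadj N"
    using assms by (simp add: cadj_mul matrix_mul_assoc)
  ultimately show ?thesis by blast
qed

lemma inv13_exists: "\<exists>G::complex^'m^'n. A ** G ** A = (A::complex^'n^'m) \<and> cadj (A ** G) = A ** G"
proof -
  define M where "M = cadj A ** A"
  have hM: "cadj M = M" by (simp add: M_def cadj_mul)
  obtain N where N: "M ** N ** M = M" "cadj N = N" using g_inverse_herm[OF hM] by blast
  define P where "P = A ** N ** M"
  have fold: "X ** cadj A ** A = X ** M" for X
    by (simp add: M_def matrix_mul_assoc)
  have MNM: "X ** M ** N ** M = X ** M" for X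
    by (metis N(1) matrix_mul_assoc)
  have cP: "cadj P = M ** N ** cadj A" using N hM by (simp add: P_def cadj_mul matrix_mul_assoc)
  have e1: "cadj P ** P = M"
    unfolding cP by (simp add: P_def matrix_mul_assoc fold MNM N)
  have e2: "cadj P ** A = M"
    unfolding cP by (simp add: matrix_mul_assoc fold N)
  have e3: "cadj A ** P = M"
    unfolding P_def by (simp add: matrix_mul_assoc fold N M_def[symmetric])
  have "cadj (P - A) ** (P - A) = 0"
    by (simp add: matrix_sub_ldistrib matrix_sub_rdistrib e1 e2 e3 M_def[symmetric])
  then have "P = A" using adj_mul_zero by fastforce
  then have 1: "A ** (N ** cadj A) ** A = A"
    by (simp add: P_def M_def matrix_mul_assoc)
  have 2: "cadj (A ** (N ** cadj A)) = A ** (N ** cadj A)"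
    using N by (simp add: cadj_mul matrix_mul_assoc)
  show ?thesis using 1 2 by blast
qed

lemma inv14_exists: "\<exists>G::complex^'m^'n. A ** G ** A = (A::complex^'n^'m) \<and> cadj (G ** A) = G ** A"
proof -
  obtain H where H: "cadj A ** H ** cadj A = cadj A" "cadj (cadj A ** H) = cadj A ** H"
    using inv13_exists[of "cadj A"] by blast
  have "A ** cadj H ** A = A"
    using arg_cong[OF H(1), of cadj] by (simp add: cadj_mul matrix_mul_assoc)
  moreover have "cadj (cadj H ** A) = cadj H ** A"
    using H(2) by (simp add: cadj_mul)
  ultimately show ?thesis by blast
qed

definition penrose :: "complex^'c^'r \<Rightarrow> complex^'r^'c \<Rightarrow> bool" where
  "penrose A G \<longleftrightarrow> A ** G ** A = A \<and> G ** A ** G = G \<and>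
                      cadj (A ** G) = A ** G \<and> cadj (G ** A) = G ** A"

lemma penrose_exists: "\<exists>G. penrose A G"
proof -
  obtain G1 where G1: "A ** G1 ** A = A" "cadj (A ** G1) = A ** G1" using inv13_exists by blast
  obtain G2 where G2: "A ** G2 ** A = A" "cadj (G2 ** A) = G2 ** A" using inv14_exists by blast
  have a1: "X ** A ** G1 ** A = X ** A" for X
    by (metis G1(1) matrix_mul_assoc)
  have a2: "X ** A ** G2 ** A = X ** A" for X
    by (metis G2(1) matrix_mul_assoc)
  define G where "G = G2 ** A ** G1"
  have "A ** G ** A = A" by (simp add: G_def matrix_mul_assoc a1 G2 G1)
  moreover have "G ** A ** G = G" by (simp add: G_def matrix_mul_assoc a1 a2)
  moreover have "A ** G = A ** G1" by (simp add: G_def matrix_mul_assoc G2)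
  moreover have "G ** A = G2 ** A" by (simp add: G_def matrix_mul_assoc a1)
  ultimately show ?thesis unfolding penrose_def using G1 G2 by metis
qed

lemma penrose_unique:
  assumes G: "penrose A G" and H: "penrose A H" shows "G = H"
proof -
  have g: "A ** G ** A = A" "G ** A ** G = G" "cadj (A ** G) = A ** G" "cadj (G ** A) = G ** A"
    using G unfolding penrose_def by auto
  have h: "A ** H ** A = A" "H ** A ** H = H" "cadj (A ** H) = A ** H" "cadj (H ** A) = H ** A"
    using H unfolding penrose_def by auto
  have "cadj A = cadj (A ** H ** A)" by (simp add: h(1))
  also have "\<dots> = cadj A ** cadj (A ** H)" by (rule cadj_mul)
  finally have aH: "cadj A = cadj A ** A ** H" by (simp add: h(3) matrix_mul_assoc)
  have aG: "cadj A = G ** A ** cadj A"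
    using arg_cong[OF g(1), of cadj] g(4) by (metis cadj_mul matrix_mul_assoc)
  have "G = G ** cadj (A ** G)" using g by (simp add: matrix_mul_assoc)
  also have "\<dots> = G ** cadj G ** cadj A" by (simp add: cadj_mul matrix_mul_assoc)
  also have "\<dots> = G ** cadj G ** cadj A ** A ** H" by (metis aH matrix_mul_assoc)
  also have "\<dots> = G ** cadj (A ** G) ** A ** H" by (simp add: cadj_mul matrix_mul_assoc)
  also have "\<dots> = G ** A ** H" using g by (simp add: matrix_mul_assoc)
  finally have 1: "G = G ** A ** H" .
  have "H = cadj (H ** A) ** H" using h by (simp add: matrix_mul_assoc)
  also have "\<dots> = cadj A ** cadj H ** H" by (simp add: cadj_mul matrix_mul_assoc)
  also have "\<dots> = G ** A ** cadj A ** cadj H ** H" by (metis aG matrix_mul_assoc)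
  also have "\<dots> = G ** A ** cadj (H ** A) ** H" by (simp add: cadj_mul matrix_mul_assoc)
  also have "\<dots> = G ** A ** H" using h by (metis matrix_mul_assoc)
  finally show ?thesis using 1 by simp
qed

lemma mp_inv_penrose: "penrose A (mp_inv A)"
proof -
  have "\<exists>!G. penrose A G" using penrose_exists penrose_unique by blast
  then show ?thesis unfolding mp_inv_def penrose_def[symmetric] by (rule theI')
qed


lemma gram_split:
  assumes "U ** cadj W = 0"
  shows "(U + W) ** cadj (U + W) = U ** cadj U + W ** cadj W"
proof -
  have "W ** cadj U = 0" using arg_cong[OF assms, of cadj] by (simp add: cadj_mul)
  then show ?thesis using assms
    by (simp add: matrix_add_ldistrib matrix_add_rdistrib')
qed

lemma loewner_set:
  assumes f: "\<And>X. f X = K + g X ** cadj (g X)" and g0: "g Z = 0"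
  shows "{Xh. \<forall>X. loewner_ge (f X) (f Xh)} = {Xh. g Xh = 0}"
proof (intro set_eqI iffI; simp)
  fix Xh assume "\<forall>X. loewner_ge (f X) (f Xh)"
  then have "loewner_ge (f Z) (f Xh)" by blast
  then have "psd (- (g Xh ** cadj (g Xh)))" by (simp add: loewner_ge_def f g0)
  then show "g Xh = 0" by (rule neg_psd_gram)
next
  fix Xh assume "g Xh = 0"
  then show "\<forall>X. loewner_ge (f X) (f Xh)" by (simp add: loewner_ge_def f psd_gram)
qed

lemma trace_set:
  assumes f: "\<And>X. Re (trace (f X)) = k + Re (trace (g X ** cadj (g X)))" and g0: "g Z = 0"
  shows "{Xh. \<forall>X. Re (trace (f Xh)) \<le> Re (trace (f X))} = {Xh. g Xh = 0}"
proof (intro set_eqI iffI; simp)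
  fix Xh assume "\<forall>X. Re (trace (f Xh)) \<le> Re (trace (f X))"
  then have "Re (trace (f Xh)) \<le> Re (trace (f Z))" by blast
  moreover have "Re (trace (f Z)) = k" using f[of Z] g0 by (simp add: trace_def)
  ultimately have "Re (trace (g Xh ** cadj (g Xh))) \<le> 0" using f[of Xh] by linarith
  then have "Re (trace (g Xh ** cadj (g Xh))) = 0" using trace_mul_adj_nonneg[of "g Xh"] by linarith
  then show "g Xh = 0" by (rule trace_mul_adj_zero)
next
  fix Xh assume "g Xh = 0"
  then have "Re (trace (f Xh)) = k" using f[of Xh] by (simp add: trace_def)
  then show "\<forall>X. Re (trace (f Xh)) \<le> Re (trace (f X))"
    using f trace_mul_adj_nonneg by (metis le_add_same_cancel1)
qed


theorem theorem7p4:
  fixes A :: "complex^'n^'m" and B :: "complex^'q^'p" and C :: "complex^'q^'m"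
  shows
  "(\<exists>Xh :: complex^'p^'n. \<forall>X :: complex^'p^'n.
       loewner_ge (cadj A ** (C - A ** X ** B) ** cadj (C - A ** X ** B) ** A)
                  (cadj A ** (C - A ** Xh ** B) ** cadj (C - A ** Xh ** B) ** A))
 \<and> (\<exists>Xh :: complex^'p^'n. \<forall>X :: complex^'p^'n.
       loewner_ge (B ** cadj (C - A ** X ** B) ** (C - A ** X ** B) ** cadj B)
                  (B ** cadj (C - A ** Xh ** B) ** (C - A ** Xh ** B) ** cadj B))
 \<and> {Xh :: complex^'p^'n. \<forall>X :: complex^'p^'n.
       loewner_ge (cadj A ** (C - A ** X ** B) ** cadj (C - A ** X ** B) ** A)
                  (cadj A ** (C - A ** Xh ** B) ** cadj (C - A ** Xh ** B) ** A)}
   = {Xh :: complex^'p^'n. \<forall>X :: complex^'p^'n.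
       loewner_ge (B ** cadj (C - A ** X ** B) ** (C - A ** X ** B) ** cadj B)
                  (B ** cadj (C - A ** Xh ** B) ** (C - A ** Xh ** B) ** cadj B)}
 \<and> {Xh :: complex^'p^'n. \<forall>X :: complex^'p^'n.
       loewner_ge (B ** cadj (C - A ** X ** B) ** (C - A ** X ** B) ** cadj B)
                  (B ** cadj (C - A ** Xh ** B) ** (C - A ** Xh ** B) ** cadj B)}
   = {Xh :: complex^'p^'n. \<forall>X :: complex^'p^'n.
       Re (trace ((C - A ** Xh ** B) ** cadj (C - A ** Xh ** B)))
         \<le> Re (trace ((C - A ** X ** B) ** cadj (C - A ** X ** B)))}
 \<and> {Xh :: complex^'p^'n. \<forall>X :: complex^'p^'n.
       Re (trace ((C - A ** Xh ** B) ** cadj (C - A ** Xh ** B)))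
         \<le> Re (trace ((C - A ** X ** B) ** cadj (C - A ** X ** B)))}
   = {mp_inv A ** C ** mp_inv B + F_mat A ** V1 + V2 ** E_mat B
        | V1 V2 :: complex^'p^'n. True}"
proof -
  define GA where "GA = mp_inv A"
  define GB where "GB = mp_inv B"
  have pA: "A ** GA ** A = A" "cadj (A ** GA) = A ** GA" "cadj (GA ** A) = GA ** A"
    using mp_inv_penrose[of A] unfolding penrose_def GA_def by auto
  have pB: "B ** GB ** B = B" "cadj (B ** GB) = B ** GB" "cadj (GB ** B) = GB ** B"
    using mp_inv_penrose[of B] unfolding penrose_def GB_def by auto
  have "cadj A = cadj (A ** GA ** A)" by (simp add: pA)
  also have "\<dots> = cadj A ** cadj (A ** GA)" by (rule cadj_mul)
  finally have hA: "cadj A ** A ** GA = cadj A" by (simp add: pA matrix_mul_assoc)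
  have "cadj B = cadj (B ** (GB ** B))" by (simp add: pB matrix_mul_assoc)
  also have "\<dots> = cadj (GB ** B) ** cadj B" by (rule cadj_mul)
  finally have hB: "GB ** B ** cadj B = cadj B" by (simp add: pB)
  have hA': "cadj GA ** cadj A ** A = A"
    using arg_cong[OF hA, of cadj] by (simp add: cadj_mul matrix_mul_assoc)
  have hB': "B ** cadj B ** cadj GB = B"
    using arg_cong[OF hB, of cadj] by (simp add: cadj_mul matrix_mul_assoc)
  have hBX: "X ** GB ** B ** cadj B = X ** cadj B" for X
    by (metis hB matrix_mul_assoc)
  define X0 where "X0 = GA ** C ** GB"
  define D where "D = C - A ** X0 ** B"
  define V where "V X = A ** (X0 - X) ** B" for X
  have key: "cadj A ** D ** cadj B = 0"
    by (simp add: D_def X0_def matrix_sub_ldistrib matrix_sub_rdistrib matrix_mul_assoc hA hBX)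
  have key': "B ** cadj D ** A = 0"
    using arg_cong[OF key, of cadj] by (simp add: cadj_mul matrix_mul_assoc)
  have R: "C - A ** X ** B = D + V X" for X
    by (simp add: D_def V_def matrix_sub_ldistrib matrix_sub_rdistrib)
  have V0: "V X0 = 0" by (simp add: V_def)
  define g1 where "g1 X = cadj A ** V X" for X
  have f1: "cadj A ** (C - A ** X ** B) ** cadj (C - A ** X ** B) ** A
      = (cadj A ** D) ** cadj (cadj A ** D) + g1 X ** cadj (g1 X)" for X
  proof -
    have c: "(cadj A ** D) ** cadj (g1 X) = 0"
      by (simp add: g1_def V_def cadj_mul matrix_mul_assoc key)
    have "cadj A ** (C - A ** X ** B) ** cadj (C - A ** X ** B) ** A
       = (cadj A ** D + g1 X) ** cadj (cadj A ** D + g1 X)"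
      by (simp add: R g1_def cadj_mul matrix_mul_assoc matrix_add_ldistrib matrix_add_rdistrib')
    then show ?thesis using gram_split[OF c] by simp
  qed
  have S1: "{Xh :: complex^'p^'n. \<forall>X :: complex^'p^'n.
       loewner_ge (cadj A ** (C - A ** X ** B) ** cadj (C - A ** X ** B) ** A)
                  (cadj A ** (C - A ** Xh ** B) ** cadj (C - A ** Xh ** B) ** A)}
      = {Xh. g1 Xh = 0}"
    by (rule loewner_set[where g = g1 and Z = X0, OF f1]) (simp add: g1_def V0)
  have g1V: "g1 X = 0 \<longleftrightarrow> V X = 0" for X
  proof
    assume "g1 X = 0"
    then have "cadj GA ** (cadj A ** V X) = 0" by (simp add: g1_def)
    then show "V X = 0" by (simp add: V_def matrix_mul_assoc hA')
  qed (simp add: g1_def)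
  define g2 where "g2 X = B ** cadj (V X)" for X
  have f2: "B ** cadj (C - A ** X ** B) ** (C - A ** X ** B) ** cadj B
      = (B ** cadj D) ** cadj (B ** cadj D) + g2 X ** cadj (g2 X)" for X
  proof -
    have c: "(B ** cadj D) ** cadj (g2 X) = 0"
      by (simp add: g2_def V_def cadj_mul matrix_mul_assoc key')
    have "B ** cadj (C - A ** X ** B) ** (C - A ** X ** B) ** cadj B
       = (B ** cadj D + g2 X) ** cadj (B ** cadj D + g2 X)"
      by (simp add: R g2_def cadj_mul matrix_mul_assoc matrix_add_ldistrib matrix_add_rdistrib')
    then show ?thesis using gram_split[OF c] by simp
  qed
  have S2: "{Xh :: complex^'p^'n. \<forall>X :: complex^'p^'n.
       loewner_ge (B ** cadj (C - A ** X ** B) ** (C - A ** X ** B) ** cadj B)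
                  (B ** cadj (C - A ** Xh ** B) ** (C - A ** Xh ** B) ** cadj B)}
      = {Xh. g2 Xh = 0}"
    by (rule loewner_set[where g = g2 and Z = X0, OF f2]) (simp add: g2_def V0)
  have g2V: "g2 X = 0 \<longleftrightarrow> V X = 0" for X
  proof
    assume "g2 X = 0"
    then have "cadj (B ** cadj (V X)) = 0" by (simp add: g2_def)
    then have "V X ** cadj B = 0" by (simp add: cadj_mul)
    then have z: "V X ** cadj B ** cadj GB = 0" by simp
    have "V X = A ** (X0 - X) ** (B ** cadj B ** cadj GB)"
      unfolding V_def hB' ..
    also have "\<dots> = V X ** cadj B ** cadj GB"
      unfolding V_def by (simp only: matrix_mul_assoc)
    finally show "V X = 0" using z by simp
  qed (simp add: g2_def)
  have f3: "Re (trace ((C - A ** X ** B) ** cadj (C - A ** X ** B)))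
      = Re (trace (D ** cadj D)) + Re (trace (V X ** cadj (V X)))" for X
  proof -
    have t1: "trace (D ** cadj (V X)) = 0"
    proof -
      have "trace (D ** cadj (V X)) = trace ((D ** cadj B ** cadj (X0 - X)) ** cadj A)"
        by (simp add: V_def cadj_mul matrix_mul_assoc)
      also have "\<dots> = trace (cadj A ** (D ** cadj B ** cadj (X0 - X)))"
        by (rule trace_mul_sym)
      also have "\<dots> = trace (cadj A ** D ** cadj B ** cadj (X0 - X))"
        by (simp only: matrix_mul_assoc)
      finally show ?thesis by (simp add: key trace_def)
    qed
    have t2: "trace (V X ** cadj D) = 0"
    proof -
      have "trace (V X ** cadj D) = trace (A ** ((X0 - X) ** B ** cadj D))"
        by (simp add: V_def matrix_mul_assoc)
      also have "\<dots> = trace (((X0 - X) ** B ** cadj D) ** A)"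
        by (rule trace_mul_sym)
      also have "\<dots> = trace ((X0 - X) ** (B ** cadj D ** A))"
        by (simp only: matrix_mul_assoc)
      finally show ?thesis by (simp add: key' trace_def)
    qed
    have "(C - A ** X ** B) ** cadj (C - A ** X ** B)
       = D ** cadj D + D ** cadj (V X) + V X ** cadj D + V X ** cadj (V X)"
      by (simp add: R matrix_add_ldistrib matrix_add_rdistrib')
    then show ?thesis by (simp add: trace_add t1 t2)
  qed
  have S3: "{Xh :: complex^'p^'n. \<forall>X :: complex^'p^'n.
       Re (trace ((C - A ** Xh ** B) ** cadj (C - A ** Xh ** B)))
         \<le> Re (trace ((C - A ** X ** B) ** cadj (C - A ** X ** B)))}
      = {Xh. V Xh = 0}"
    by (rule trace_set[where g = V and Z = X0, OF f3]) (simp add: V0)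
  have S4: "{mp_inv A ** C ** mp_inv B + F_mat A ** V1 + V2 ** E_mat B
        | V1 V2 :: complex^'p^'n. True} = {Xh. V Xh = 0}"
  proof (intro set_eqI iffI)
    fix Xh assume "Xh \<in> {mp_inv A ** C ** mp_inv B + F_mat A ** V1 + V2 ** E_mat B
        | V1 V2 :: complex^'p^'n. True}"
    then obtain V1 V2 where Xh: "Xh = X0 + F_mat A ** V1 + V2 ** E_mat B"
      unfolding X0_def GA_def GB_def by blast
    have "A ** F_mat A = 0"
      by (simp add: F_mat_def GA_def[symmetric] matrix_sub_ldistrib matrix_mul_assoc pA)
    moreover have "E_mat B ** B = 0"
      by (simp add: E_mat_def GB_def[symmetric] matrix_sub_rdistrib matrix_mul_assoc[symmetric])
         (simp add: matrix_mul_assoc pB)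
    ultimately have "A ** (F_mat A ** V1 + V2 ** E_mat B) ** B = 0"
      by (simp add: matrix_add_ldistrib matrix_add_rdistrib' matrix_mul_assoc)
         (metis matrix_mul_assoc matrix_mul_lzero' matrix_mul_rzero')
    then show "Xh \<in> {Xh. V Xh = 0}"
      by (simp add: Xh V_def matrix_sub_ldistrib matrix_sub_rdistrib matrix_add_ldistrib
          matrix_add_rdistrib' matrix_mul_assoc)
  next
    fix Xh assume "Xh \<in> {Xh. V Xh = 0}"
    then have v: "A ** (X0 - Xh) ** B = 0" by (simp add: V_def)
    define W where "W = Xh - X0"
    have AW: "A ** W ** B = 0" using v
      by (simp add: W_def matrix_sub_ldistrib matrix_sub_rdistrib)
    have "F_mat A ** W + (GA ** A ** W) ** E_mat B = W - GA ** (A ** W ** B) ** GB"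
      by (simp add: F_mat_def E_mat_def GA_def[symmetric] GB_def[symmetric] matrix_sub_ldistrib
          matrix_sub_rdistrib matrix_mul_assoc)
    then have e: "F_mat A ** W + (GA ** A ** W) ** E_mat B = W"
      by (simp add: AW)
    have "X0 + F_mat A ** W + (GA ** A ** W) ** E_mat B = X0 + W"
      using e by (simp only: add.assoc)
    also have "\<dots> = Xh" by (simp add: W_def)
    finally have "Xh = X0 + F_mat A ** W + (GA ** A ** W) ** E_mat B" by simp
    then show "Xh \<in> {mp_inv A ** C ** mp_inv B + F_mat A ** V1 + V2 ** E_mat B
        | V1 V2 :: complex^'p^'n. True}"
      unfolding X0_def GA_def GB_def by blast
  qed
  have m1: "X0 \<in> {Xh. g1 Xh = 0}" by (simp add: g1V V0)
  have m2: "X0 \<in> {Xh. g2 Xh = 0}" by (simp add: g2V V0)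
  have E1: "{Xh. g1 Xh = 0} = {Xh. V Xh = 0}" using g1V by blast
  have E2: "{Xh. g2 Xh = 0} = {Xh. V Xh = 0}" using g2V by blast
  show ?thesis
    unfolding S1 S2 S3 S4 E1 E2
    using m1 m2 unfolding S1[symmetric] S2[symmetric] by blast
qed

end
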